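(* Let $f_i:\mathbb{R}^d\to\mathbb{R}$, $i\in[n]$, be differentiable and $L$-smooth, $f=\frac1n\sum_i f_i$, and $f_*:=\inf f$. Let $\boldsymbol{W}=(w_{ir})$ be nonnegative and doubly stochastic. Consider any realization of the iterates of GT-NSGDm (described in the context) with step size $\alpha>0$ and any $\beta\in[0,1)$, and let $\bar{\boldsymbol{x}}^t=\frac1n\sum_i\boldsymbol{x}_i^t$, $\bar{\boldsymbol{y}}^t=\frac1n\sum_i\boldsymbol{y}_i^t$, and $\boldsymbol{\epsilon}^t=\bar{\boldsymbol{y}}^t-\nabla f(\bar{\boldsymbol{x}}^t)$. Then for every $T\ge1$, $$\sum_{t=0}^{T-1}\alpha\|\nabla f(\bar{\boldsymbol{x}}^t)\|\le f(\bar{\boldsymbol{x}}^0)-f_*+\sum_{t=0}^{T-1}2\alpha\|\boldsymbol{\epsilon}^t\|+\sum_{t=0}^{T-1}\frac{\alpha}{n}\sum_{i=1}^n\|\bar{\boldsymbol{y}}^t-\boldsymbol{y}_i^t\|+\sum_{t=0}^{T-1}\frac{L}{2}\alpha^2.$$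
   Context: Algorithm GT-NSGDm (run in parallel at every node $i$): initialize $\boldsymbol{x}_i^{-1}=\boldsymbol{x}_i^0=\bar{\boldsymbol{x}}^0$ (a common point) and $\boldsymbol{v}_i^{-1}=\boldsymbol{y}_i^{-1}=\mathbf{0}_d$. For $t=0,\dots,T-1$: sample $\boldsymbol{\xi}_i^t$; set $\boldsymbol{v}_i^t=\beta\boldsymbol{v}_i^{t-1}+(1-\beta)\boldsymbol{g}_i(\boldsymbol{x}_i^t,\boldsymbol{\xi}_i^t)$; $\boldsymbol{y}_i^t=\sum_{r=1}^n w_{ir}(\boldsymbol{y}_r^{t-1}+\boldsymbol{v}_r^t-\boldsymbol{v}_r^{t-1})$; $\boldsymbol{x}_i^{t+1}=\sum_{r=1}^n w_{ir}\big(\boldsymbol{x}_r^t-\alpha\,\boldsymbol{y}_r^t/\|\boldsymbol{y}_r^t\|\big)$, where $\boldsymbol{g}_i(\boldsymbol{x},\boldsymbol{\xi})$ is node $i$'s stochastic gradient. *)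

theory Defs
  imports "HOL-Analysis.Analysis"
begin

definition avg :: "nat \<Rightarrow> (nat \<Rightarrow> 'a::real_normed_vector) \<Rightarrow> 'a" where
  "avg n u = (1 / real n) *\<^sub>R (\<Sum>i<n. u i)"

definition doubly_stochastic :: "nat \<Rightarrow> (nat \<Rightarrow> nat \<Rightarrow> real) \<Rightarrow> bool" where
  "doubly_stochastic n W \<longleftrightarrow>
     (\<forall>i<n. \<forall>r<n. 0 \<le> W i r) \<and>
     (\<forall>i<n. (\<Sum>r<n. W i r) = 1) \<and>
     (\<forall>r<n. (\<Sum>i<n. W i r) = 1)"

definition L_smooth :: "real \<Rightarrow> ('a::real_inner \<Rightarrow> real) \<Rightarrow> ('a \<Rightarrow> 'a) \<Rightarrow> bool" where
  "L_smooth L f gf \<longleftrightarrow>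
     (\<forall>x. (f has_derivative (\<lambda>h. gf x \<bullet> h)) (at x)) \<and>
     (\<forall>x y. norm (gf x - gf y) \<le> L * norm (x - y))"

end

theory Submission
  imports Defs "HOL-Analysis.Analysis"
begin



lemma descent:
  fixes F :: "'a::real_inner \<Rightarrow> real"
  assumes D: "\<And>x. (F has_derivative (\<lambda>h. G x \<bullet> h)) (at x)"
    and Lp: "\<And>x y. norm (G x - G y) \<le> L * norm (x - y)"
  shows "F b \<le> F a + G a \<bullet> (b - a) + L / 2 * (norm (b - a))\<^sup>2"
proof -
  define d where "d = b - a"
  define \<phi> where "\<phi> s = F (a + s *\<^sub>R d) - s * (G a \<bullet> d) - L / 2 * s\<^sup>2 * (norm d)\<^sup>2" for s
  have "\<phi> 1 \<le> \<phi> 0"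
  proof (rule DERIV_nonpos_imp_nonincreasing[of 0 1])
    fix s :: real assume s: "0 \<le> s" "s \<le> 1"
    have l: "((\<lambda>s. a + s *\<^sub>R d) has_derivative (\<lambda>h. h *\<^sub>R d)) (at s)"
      by (auto intro!: derivative_eq_intros)
    have c: "((\<lambda>s. F (a + s *\<^sub>R d)) has_derivative (\<lambda>h. G (a + s *\<^sub>R d) \<bullet> (h *\<^sub>R d))) (at s)"
      using has_derivative_compose[OF l D] by simp
    have c2: "((\<lambda>s. F (a + s *\<^sub>R d)) has_field_derivative (G (a + s *\<^sub>R d) \<bullet> d)) (at s)"
      unfolding has_field_derivative_def using c by (simp add: mult.commute[of _ "G (a + s *\<^sub>R d) \<bullet> d"])
    have "(\<phi> has_field_derivative (G (a + s *\<^sub>R d) \<bullet> d - G a \<bullet> d - L / 2 * (2 * s) * (norm d)\<^sup>2)) (at s)"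
      unfolding \<phi>_def[abs_def]
      by (rule derivative_eq_intros c2 | simp)+
    moreover have "G (a + s *\<^sub>R d) \<bullet> d - G a \<bullet> d - L / 2 * (2 * s) * (norm d)\<^sup>2 \<le> 0"
    proof -
      have "G (a + s *\<^sub>R d) \<bullet> d - G a \<bullet> d = (G (a + s *\<^sub>R d) - G a) \<bullet> d"
        by (simp add: inner_diff_left)
      also have "\<dots> \<le> norm (G (a + s *\<^sub>R d) - G a) * norm d"
        by (rule norm_cauchy_schwarz)
      also have "\<dots> \<le> L * norm (s *\<^sub>R d) * norm d"
        using Lp[of "a + s *\<^sub>R d" a] by (simp add: mult_right_mono)
      also have "\<dots> = L / 2 * (2 * s) * (norm d)\<^sup>2"
        using s by (simp add: power2_eq_square)
      finally show ?thesis by simp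
    qed
    ultimately show "\<exists>y. (\<phi> has_real_derivative y) (at s) \<and> y \<le> 0" by blast
  qed simp
  then show ?thesis unfolding \<phi>_def d_def by simp
qed

lemma L_nonneg:
  fixes G :: "'a::euclidean_space \<Rightarrow> 'a"
  assumes Lp: "\<And>x y. norm (G x - G y) \<le> L * norm (x - y)"
  shows "L \<ge> 0"
proof -
  obtain e :: 'a where e: "e \<in> Basis" using nonempty_Basis by blast
  have "0 \<le> norm (G e - G 0)" by simp
  also have "\<dots> \<le> L * norm (e - 0)" by (rule Lp)
  finally show ?thesis using e by simp
qed

theorem lemma3:
  fixes n :: nat and L \<alpha> \<beta> :: real
    and fs :: "nat \<Rightarrow> 'a::euclidean_space \<Rightarrow> real"
    and gfs :: "nat \<Rightarrow> 'a \<Rightarrow> 'a"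
    and W :: "nat \<Rightarrow> nat \<Rightarrow> real"
    and g :: "nat \<Rightarrow> 'a \<Rightarrow> 's \<Rightarrow> 'a"
    and \<xi> :: "nat \<Rightarrow> nat \<Rightarrow> 's"
    and x v y :: "nat \<Rightarrow> nat \<Rightarrow> 'a"
    and x0 :: 'a and T :: nat
  assumes n_pos: "n \<ge> 1"
    and smooth: "\<And>i. i < n \<Longrightarrow> L_smooth L (fs i) (gfs i)"
    and W_ds: "doubly_stochastic n W"
    and alpha_pos: "\<alpha> > 0"
    and beta: "0 \<le> \<beta>" "\<beta> < 1"
    and x_init: "\<And>i. i < n \<Longrightarrow> x 0 i = x0"
    and v_init: "\<And>i. i < n \<Longrightarrow> v 0 i = (1 - \<beta>) *\<^sub>R g i (x 0 i) (\<xi> 0 i)"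
    and y_init: "\<And>i. i < n \<Longrightarrow> y 0 i = (\<Sum>r<n. W i r *\<^sub>R v 0 r)"
    and v_step: "\<And>t i. i < n \<Longrightarrow>
        v (Suc t) i = \<beta> *\<^sub>R v t i + (1 - \<beta>) *\<^sub>R g i (x (Suc t) i) (\<xi> (Suc t) i)"
    and y_step: "\<And>t i. i < n \<Longrightarrow>
        y (Suc t) i = (\<Sum>r<n. W i r *\<^sub>R (y t r + v (Suc t) r - v t r))"
    and x_step: "\<And>t i. i < n \<Longrightarrow>
        x (Suc t) i = (\<Sum>r<n. W i r *\<^sub>R (x t r - \<alpha> *\<^sub>R ((1 / norm (y t r)) *\<^sub>R y t r)))"
    and T_pos: "T \<ge> 1"
  shows
    "(let f = (\<lambda>z. (1 / real n) * (\<Sum>i<n. fs i z));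
          gradf = (\<lambda>z. avg n (\<lambda>i. gfs i z));
          xbar = (\<lambda>t. avg n (x t));
          ybar = (\<lambda>t. avg n (y t));
          eps = (\<lambda>t. ybar t - gradf (xbar t));
          fstar = (INF z. ereal (f z))
      in ereal (\<Sum>t<T. \<alpha> * norm (gradf (xbar t)))
         \<le> ereal (f (xbar 0)) - fstar
           + ereal ((\<Sum>t<T. 2 * \<alpha> * norm (eps t))
                  + (\<Sum>t<T. (\<alpha> / real n) * (\<Sum>i<n. norm (ybar t - y t i)))
                  + (\<Sum>t<T. L / 2 * \<alpha>\<^sup>2)))"
  proof -
  define F where "F = (\<lambda>z. (1 / real n) * (\<Sum>i<n. fs i z))"
  define Gr where "Gr = (\<lambda>z. avg n (\<lambda>i. gfs i z))"
  define xb where "xb = (\<lambda>t. avg n (x t))"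
  define yb where "yb = (\<lambda>t. avg n (y t))"
  define ep where "ep = (\<lambda>t. yb t - Gr (xb t))"
  define fstar where "fstar = (INF z. ereal (F z))"
  define u where "u = (\<lambda>t r. (1 / norm (y t r)) *\<^sub>R y t r)"
  have nR: "real n > 0" using n_pos by simp
  have FD: "(F has_derivative (\<lambda>h. Gr z \<bullet> h)) (at z)" for z
  proof -
    have "(F has_derivative (\<lambda>h. (1 / real n) * (\<Sum>i<n. gfs i z \<bullet> h))) (at z)"
      unfolding F_def
      by (intro has_derivative_mult_right has_derivative_sum) (use smooth in \<open>auto simp: L_smooth_def\<close>)
    moreover have "(\<lambda>h. (1 / real n) * (\<Sum>i<n. gfs i z \<bullet> h)) = (\<lambda>h. Gr z \<bullet> h)"
      by (auto simp: Gr_def avg_def inner_sum_left)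
    ultimately show ?thesis by simp
  qed
  have GL: "norm (Gr p - Gr q) \<le> L * norm (p - q)" for p q
  proof -
    have "Gr p - Gr q = (1 / real n) *\<^sub>R (\<Sum>i<n. gfs i p - gfs i q)"
      by (simp add: Gr_def avg_def sum_subtractf scaleR_diff_right)
    hence "norm (Gr p - Gr q) = (1 / real n) * norm (\<Sum>i<n. gfs i p - gfs i q)" by simp
    also have "\<dots> \<le> (1 / real n) * (\<Sum>i<n. norm (gfs i p - gfs i q))"
      by (intro mult_left_mono norm_sum) auto
    also have "\<dots> \<le> (1 / real n) * (\<Sum>i<n. L * norm (p - q))"
      by (intro mult_left_mono sum_mono) (use smooth in \<open>auto simp: L_smooth_def\<close>)
    also have "\<dots> = L * norm (p - q)" using nR by simp
    finally show ?thesis .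
  qed
  have L0: "L \<ge> 0" by (rule L_nonneg[OF GL])
  obtain Wn: "\<And>i r. i < n \<Longrightarrow> r < n \<Longrightarrow> 0 \<le> W i r" and Wc: "\<And>r. r < n \<Longrightarrow> (\<Sum>i<n. W i r) = 1"
    using W_ds unfolding doubly_stochastic_def by blast
  have xstep: "xb (Suc t) = xb t - \<alpha> *\<^sub>R avg n (u t)" for t
  proof -
    have "(\<Sum>i<n. x (Suc t) i) = (\<Sum>i<n. \<Sum>r<n. W i r *\<^sub>R (x t r - \<alpha> *\<^sub>R u t r))"
      using x_step by (simp add: u_def)
    also have "\<dots> = (\<Sum>r<n. \<Sum>i<n. W i r *\<^sub>R (x t r - \<alpha> *\<^sub>R u t r))"
      by (rule sum.swap)
    also have "\<dots> = (\<Sum>r<n. (x t r - \<alpha> *\<^sub>R u t r))"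
      by (rule sum.cong) (auto simp: scaleR_sum_left[symmetric] Wc)
    finally show ?thesis
      by (simp add: xb_def avg_def sum_subtractf scaleR_diff_right scaleR_sum_right[symmetric])
  qed
  have unorm: "norm (u t r) \<le> 1" for t r
    by (cases "y t r = 0") (auto simp: u_def)
  have avgu: "norm (avg n (u t)) \<le> 1" for t
  proof -
    have "norm (avg n (u t)) = (1 / real n) * norm (\<Sum>i<n. u t i)" by (simp add: avg_def)
    also have "\<dots> \<le> (1 / real n) * (\<Sum>i<n. norm (u t i))"
      by (intro mult_left_mono norm_sum) auto
    also have "\<dots> \<le> (1 / real n) * (\<Sum>i<n. 1)"
      by (intro mult_left_mono sum_mono unorm) auto
    also have "\<dots> = 1" using nR by simp
    finally show ?thesis .
  qed
  have key: "Gr (xb t) \<bullet> avg n (u t) \<ge> norm (Gr (xb t)) - 2 * norm (ep t)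
              - (1 / real n) * (\<Sum>i<n. norm (yb t - y t i))" for t
  proof -
    have each: "Gr (xb t) \<bullet> u t i \<ge> norm (y t i) - norm (yb t - y t i) - norm (ep t)" for i
    proof -
      have gi: "Gr (xb t) = y t i + (yb t - y t i) - ep t" by (simp add: ep_def)
      have a: "y t i \<bullet> u t i = norm (y t i)"
        by (cases "y t i = 0") (auto simp: u_def power2_norm_eq_inner[symmetric] power2_eq_square)
      have b: "(yb t - y t i) \<bullet> u t i \<ge> - norm (yb t - y t i)"
      proof -
        have "\<bar>(yb t - y t i) \<bullet> u t i\<bar> \<le> norm (yb t - y t i) * norm (u t i)" by (rule Cauchy_Schwarz_ineq2)
        also have "\<dots> \<le> norm (yb t - y t i)" using unorm[of t i] by (simp add: mult_left_le)
        finally show ?thesis by linarith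
      qed
      have c: "ep t \<bullet> u t i \<le> norm (ep t)"
      proof -
        have "\<bar>ep t \<bullet> u t i\<bar> \<le> norm (ep t) * norm (u t i)" by (rule Cauchy_Schwarz_ineq2)
        also have "\<dots> \<le> norm (ep t)" using unorm[of t i] by (simp add: mult_left_le)
        finally show ?thesis by linarith
      qed
      show ?thesis using a b c by (subst gi) (simp add: inner_diff_left inner_add_left)
    qed
    have ybn: "norm (yb t) \<le> (1 / real n) * (\<Sum>i<n. norm (y t i))"
      unfolding yb_def avg_def using nR by (simp add: norm_sum divide_right_mono)
    have "norm (Gr (xb t)) \<le> norm (yb t) + norm (ep t)"
      using norm_triangle_ineq4[of "yb t" "ep t"] by (simp add: ep_def)
    have "Gr (xb t) \<bullet> avg n (u t) = (1 / real n) * (\<Sum>i<n. Gr (xb t) \<bullet> u t i)"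
      by (simp add: avg_def inner_sum_right)
    also have "\<dots> \<ge> (1 / real n) * (\<Sum>i<n. norm (y t i) - norm (yb t - y t i) - norm (ep t))"
      by (intro mult_left_mono sum_mono each) auto
    finally have "Gr (xb t) \<bullet> avg n (u t) \<ge> (1 / real n) * (\<Sum>i<n. norm (y t i))
        - (1 / real n) * (\<Sum>i<n. norm (yb t - y t i)) - norm (ep t)"
      using nR by (simp add: sum_subtractf right_diff_distrib)
    then show ?thesis using ybn \<open>norm (Gr (xb t)) \<le> norm (yb t) + norm (ep t)\<close> by linarith
  qed
  have step: "\<alpha> * norm (Gr (xb t)) \<le> F (xb t) - F (xb (Suc t)) + (2 * \<alpha> * norm (ep t)
      + (\<alpha> / real n) * (\<Sum>i<n. norm (yb t - y t i)) + L / 2 * \<alpha>\<^sup>2)" for t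
  proof -
    have d: "F (xb (Suc t)) \<le> F (xb t) + Gr (xb t) \<bullet> (xb (Suc t) - xb t) + L / 2 * (norm (xb (Suc t) - xb t))\<^sup>2"
      by (rule descent[OF FD GL])
    have e1: "Gr (xb t) \<bullet> (xb (Suc t) - xb t) = - \<alpha> * (Gr (xb t) \<bullet> avg n (u t))"
      by (simp add: xstep)
    have e2: "(norm (xb (Suc t) - xb t))\<^sup>2 \<le> \<alpha>\<^sup>2"
    proof -
      have "norm (xb (Suc t) - xb t) = \<alpha> * norm (avg n (u t))" using alpha_pos by (simp add: xstep)
      also have "\<dots> \<le> \<alpha>" using avgu[of t] alpha_pos by (simp add: mult_left_le)
      finally show ?thesis by (intro power_mono) auto
    qed
    have e3: "L / 2 * (norm (xb (Suc t) - xb t))\<^sup>2 \<le> L / 2 * \<alpha>\<^sup>2"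
      using e2 L0 by (intro mult_left_mono) auto
    have k: "\<alpha> * (Gr (xb t) \<bullet> avg n (u t)) \<ge> \<alpha> * (norm (Gr (xb t)) - 2 * norm (ep t)
              - (1 / real n) * (\<Sum>i<n. norm (yb t - y t i)))"
      using key[of t] alpha_pos by (intro mult_left_mono) auto
    show ?thesis using d e1 e3 k by (simp add: algebra_simps)
  qed
  have sumineq: "(\<Sum>t<T. \<alpha> * norm (Gr (xb t))) \<le> F (xb 0) - F (xb T) +
      ((\<Sum>t<T. 2 * \<alpha> * norm (ep t)) + (\<Sum>t<T. (\<alpha> / real n) * (\<Sum>i<n. norm (yb t - y t i)))
       + (\<Sum>t<T. L / 2 * \<alpha>\<^sup>2))"
  proof -
    have "(\<Sum>t<T. \<alpha> * norm (Gr (xb t))) \<le> (\<Sum>t<T. F (xb t) - F (xb (Suc t)) + (2 * \<alpha> * norm (ep t)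
      + (\<alpha> / real n) * (\<Sum>i<n. norm (yb t - y t i)) + L / 2 * \<alpha>\<^sup>2))"
      by (rule sum_mono) (rule step)
    also have "\<dots> = F (xb 0) - F (xb T) +
      ((\<Sum>t<T. 2 * \<alpha> * norm (ep t)) + (\<Sum>t<T. (\<alpha> / real n) * (\<Sum>i<n. norm (yb t - y t i)))
       + (\<Sum>t<T. L / 2 * \<alpha>\<^sup>2))"
      by (simp only: sum.distrib sum_lessThan_telescope'[of "\<lambda>t. F (xb t)"])
    finally show ?thesis .
  qed
  have fs_le: "fstar \<le> ereal (F (xb T))" unfolding fstar_def by (rule INF_lower) simp
  define S where "S = (\<Sum>t<T. 2 * \<alpha> * norm (ep t)) + (\<Sum>t<T. (\<alpha> / real n) * (\<Sum>i<n. norm (yb t - y t i)))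
       + (\<Sum>t<T. L / 2 * \<alpha>\<^sup>2)"
  have main: "ereal (\<Sum>t<T. \<alpha> * norm (Gr (xb t))) \<le> ereal (F (xb 0)) - fstar + ereal S"
  proof (cases fstar)
    case (real c)
    then show ?thesis using fs_le sumineq unfolding S_def by simp
  next
    case PInf then show ?thesis using fs_le by simp
  next
    case MInf then show ?thesis by simp
  qed
  show ?thesis
    unfolding Let_def using main
    unfolding S_def F_def Gr_def xb_def yb_def ep_def fstar_def .
qed

end
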